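(* Let $\varepsilon\in\{-1,1\}$, let $M(\phi,\xi,\eta,g_M)$ be a Lorentzian almost (para)contact manifold of dimension $2m+1$, let $(N,g_N)$ be a semi-Riemannian manifold of dimension $n$, and let $F:M\to N$ be an anti-invariant semi-Riemannian submersion. If $m=n$, then $\phi(\ker F_* )=(\ker F_* )^\perp$. Moreover, $N$ is a Riemannian manifold.
   Context: A Lorentzian almost contact ($\varepsilon=-1$), resp. almost paracontact ($\varepsilon=1$), manifold is a $(2m+1)$-dimensional manifold $M$ with Lorentzian metric $g_M$, $(1,1)$-tensor $\phi$, vector field $\xi$ and $1$-form $\eta$ with $\phi^2X=\varepsilon X+\eta(X)\xi$, $g_M(\phi X,\phi Y)=g_M(X,Y)+\eta(X)\eta(Y)$, $\eta(X)=\varepsilon g_M(X,\xi)$, $\eta(\xi)=-\varepsilon$. A semi-Riemannian submersion $F:M\to N$ is a submersion with nondegenerate fibres such that $F_*$ is an isometry from $(\ker F_* )^\perp$ onto $TN$; it is anti-invariant if $\phi(\ker F_* )\subseteq(\ker F_* )^\perp$. A Riemannian manifold has positive definite metric. *)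

theory Defs
  imports "HOL-Analysis.Analysis"
begin

text \<open>A tangent space of the (2m+1)-manifold M is modelled by a fixed euclidean_space type 'v,
  a tangent space of N by a type 'w; tensor fields are point-indexed families.\<close>

definition sym_bilinear_form :: "('v::real_vector \<Rightarrow> 'v \<Rightarrow> real) \<Rightarrow> bool" where
  "sym_bilinear_form g \<longleftrightarrow> bilinear g \<and> (\<forall>x y. g x y = g y x)"

definition nondegenerate_form :: "('v::real_vector \<Rightarrow> 'v \<Rightarrow> real) \<Rightarrow> bool" where
  "nondegenerate_form g \<longleftrightarrow> (\<forall>x. (\<forall>y. g x y = 0) \<longrightarrow> x = 0)"

definition semi_riemannian_form :: "('v::real_vector \<Rightarrow> 'v \<Rightarrow> real) \<Rightarrow> bool" where
  "semi_riemannian_form g \<longleftrightarrow> sym_bilinear_form g \<and> nondegenerate_form g"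

definition form_index :: "('v::euclidean_space \<Rightarrow> 'v \<Rightarrow> real) \<Rightarrow> nat" where
  "form_index g = Max {dim W | W. subspace W \<and> (\<forall>x\<in>W. x \<noteq> 0 \<longrightarrow> g x x < 0)}"

definition lorentzian_form :: "('v::euclidean_space \<Rightarrow> 'v \<Rightarrow> real) \<Rightarrow> bool" where
  "lorentzian_form g \<longleftrightarrow> semi_riemannian_form g \<and> form_index g = 1"

definition positive_definite_form :: "('v::real_vector \<Rightarrow> 'v \<Rightarrow> real) \<Rightarrow> bool" where
  "positive_definite_form g \<longleftrightarrow> sym_bilinear_form g \<and> (\<forall>x. x \<noteq> 0 \<longrightarrow> g x x > 0)"

definition orth_compl :: "('v \<Rightarrow> 'v \<Rightarrow> real) \<Rightarrow> 'v set \<Rightarrow> 'v set" where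
  "orth_compl g S = {x. \<forall>y\<in>S. g x y = 0}"

definition nondegenerate_on :: "('v::real_vector \<Rightarrow> 'v \<Rightarrow> real) \<Rightarrow> 'v set \<Rightarrow> bool" where
  "nondegenerate_on g S \<longleftrightarrow> (\<forall>x\<in>S. (\<forall>y\<in>S. g x y = 0) \<longrightarrow> x = 0)"

text \<open>Lorentzian almost contact (eps = -1) / almost paracontact (eps = 1) structure at every point.\<close>
definition lorentzian_almost_para_contact ::
  "real \<Rightarrow> ('p \<Rightarrow> 'v::euclidean_space \<Rightarrow> 'v \<Rightarrow> real) \<Rightarrow> ('p \<Rightarrow> 'v \<Rightarrow> 'v) \<Rightarrow> ('p \<Rightarrow> 'v)
     \<Rightarrow> ('p \<Rightarrow> 'v \<Rightarrow> real) \<Rightarrow> bool" where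
  "lorentzian_almost_para_contact eps g \<phi> \<xi> \<eta> \<longleftrightarrow>
     (\<forall>p. lorentzian_form (g p) \<and> linear (\<phi> p) \<and> linear (\<eta> p) \<and>
       (\<forall>X. \<phi> p (\<phi> p X) = eps *\<^sub>R X + \<eta> p X *\<^sub>R \<xi> p) \<and>
       (\<forall>X Y. g p (\<phi> p X) (\<phi> p Y) = g p X Y + \<eta> p X * \<eta> p Y) \<and>
       (\<forall>X. \<eta> p X = eps * g p X (\<xi> p)) \<and>
       \<eta> p (\<xi> p) = - eps)"

text \<open>Semi-Riemannian submersion F with differential dF (dF p : T_pM \<rightarrow> T_{F p}N).\<close>
definition semi_riemannian_submersion ::
  "('p \<Rightarrow> 'v::euclidean_space \<Rightarrow> 'v \<Rightarrow> real) \<Rightarrow> ('q \<Rightarrow> 'w::euclidean_space \<Rightarrow> 'w \<Rightarrow> real)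
     \<Rightarrow> ('p \<Rightarrow> 'q) \<Rightarrow> ('p \<Rightarrow> 'v \<Rightarrow> 'w) \<Rightarrow> bool" where
  "semi_riemannian_submersion gM gN F dF \<longleftrightarrow>
     surj F \<and>
     (\<forall>p. linear (dF p) \<and> surj (dF p) \<and>
       nondegenerate_on (gM p) {v. dF p v = 0} \<and>
       bij_betw (dF p) (orth_compl (gM p) {v. dF p v = 0}) UNIV \<and>
       (\<forall>X\<in>orth_compl (gM p) {v. dF p v = 0}. \<forall>Y\<in>orth_compl (gM p) {v. dF p v = 0}.
          gN (F p) (dF p X) (dF p Y) = gM p X Y))"

definition anti_invariant ::
  "('p \<Rightarrow> 'v::euclidean_space \<Rightarrow> 'v \<Rightarrow> real) \<Rightarrow> ('p \<Rightarrow> 'v \<Rightarrow> 'v) \<Rightarrow> ('p \<Rightarrow> 'v \<Rightarrow> 'w::real_vector) \<Rightarrow> bool" where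
  "anti_invariant gM \<phi> dF \<longleftrightarrow>
     (\<forall>p. \<phi> p ` {v. dF p v = 0} \<subseteq> orth_compl (gM p) {v. dF p v = 0})"

end

theory Submission imports Defs begin

lemma quad_expand:
  assumes "bilinear g" "\<forall>x y. g x y = g y x"
  shows "g (a *\<^sub>R x + b *\<^sub>R y) (a *\<^sub>R x + b *\<^sub>R y) = a*a * g x x + 2*a*b * g x y + b*b * g y y"
proof -
  have "g (a *\<^sub>R x + b *\<^sub>R y) (a *\<^sub>R x + b *\<^sub>R y) = a*a * g x x + a*b * g x y + b*a * g y x + b*b * g y y"
    using assms(1) by (simp add: bilinear_ladd bilinear_radd bilinear_lmul bilinear_rmul algebra_simps)
  then show ?thesis using assms(2)[rule_format, of y x] by (simp add: algebra_simps)
qed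

lemma index_bound:
  fixes g :: "'v::euclidean_space \<Rightarrow> 'v \<Rightarrow> real"
  assumes "lorentzian_form g" "subspace W" "\<forall>x\<in>W. x \<noteq> 0 \<longrightarrow> g x x < 0"
  shows "dim W \<le> 1"
proof -
  let ?S = "{dim W | W. subspace W \<and> (\<forall>x\<in>W. x \<noteq> 0 \<longrightarrow> g x x < 0)}"
  have fin: "finite ?S"
    by (rule finite_subset[of _ "{..DIM('v)}"]) (auto simp: dim_subset_UNIV)
  have "dim W \<le> Max ?S" using assms(2,3) by (intro Max_ge[OF fin]) blast
  then show ?thesis using assms(1) by (simp add: lorentzian_form_def form_index_def)
qed

lemma no_neg_perp:
  fixes g :: "'v::euclidean_space \<Rightarrow> 'v \<Rightarrow> real"
  assumes L: "lorentzian_form g" and e: "g e e < 0" and Y: "g Y e = 0" "g Y Y < 0"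
  shows False
proof -
  have bil: "bilinear g" and sy: "\<forall>x y. g x y = g y x"
    using L by (auto simp: lorentzian_form_def semi_riemannian_form_def sym_bilinear_form_def)
  have Y0: "Y \<noteq> 0" using Y bil by (auto simp: bilinear_lzero)
  have ns: "e \<notin> span {Y}"
  proof
    assume "e \<in> span {Y}"
    then obtain k where "e = k *\<^sub>R Y" by (auto simp: span_singleton)
    then have "g e e = k * g Y e" using bil sy by (simp add: bilinear_lmul)
    with Y e show False by simp
  qed
  have "dim (insert e {Y}) = 2" using ns Y0 by (simp add: dim_insert)
  moreover have "dim (span {e, Y}) \<le> 1"
  proof (rule index_bound[OF L subspace_span], intro ballI impI)
    fix x assume "x \<in> span {e, Y}" "x \<noteq> 0"
    then obtain a b where x: "x = a *\<^sub>R e + b *\<^sub>R Y"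
      by (auto simp: span_insert span_singleton) (metis add.commute diff_add_cancel)
    have gx: "g x x = a*a * g e e + b*b * g Y Y"
      using quad_expand[OF bil sy, of a e b Y] x sy Y by auto
    have "a \<noteq> 0 \<or> b \<noteq> 0" using x \<open>x \<noteq> 0\<close> by auto
    then show "g x x < 0" unfolding gx using e Y
      by (smt (verit) mult_nonneg_nonneg mult_pos_neg mult_neg_pos zero_less_mult_iff mult_nonneg_nonpos)
  qed
  ultimately show False by (simp add: dim_span)
qed

lemma perp_pos:
  fixes g :: "'v::euclidean_space \<Rightarrow> 'v \<Rightarrow> real"
  assumes L: "lorentzian_form g" and e: "g e e < 0" and Y: "g Y e = 0" "Y \<noteq> 0"
  shows "g Y Y > 0"
proof (rule ccontr)
  assume "\<not> g Y Y > 0"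
  have bil: "bilinear g" and sy: "\<forall>x y. g x y = g y x" and nd: "nondegenerate_form g"
    using L by (auto simp: lorentzian_form_def semi_riemannian_form_def sym_bilinear_form_def)
  show False
  proof (cases "g Y Y < 0")
    case True then show False using no_neg_perp[OF L e Y(1)] by blast
  next
    case False
    then have YY: "g Y Y = 0" using \<open>\<not> g Y Y > 0\<close> by simp
    obtain Z where Z: "g Y Z \<noteq> 0" using nd Y(2) by (auto simp: nondegenerate_form_def)
    define Z' where "Z' = Z - (g Z e / g e e) *\<^sub>R e"
    have Z'e: "g Z' e = 0" unfolding Z'_def using e bil by (simp add: bilinear_lsub bilinear_lmul)
    have YZ': "g Y Z' = g Y Z" unfolding Z'_def using bil Y(1) sy
      by (simp add: bilinear_rsub bilinear_rmul)
    define a where "a = g Y Z'"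
    define c where "c = g Z' Z'"
    define t where "t = \<bar>c\<bar> + 1"
    define s where "s = a / t"
    have a0: "a \<noteq> 0" using Z YZ' a_def by simp
    have t0: "t > 0" and ct: "c \<le> t" unfolding t_def by auto
    define W where "W = 1 *\<^sub>R Y + (- s) *\<^sub>R Z'"
    have We: "g W e = 0" unfolding W_def using bil Y(1) Z'e by (simp add: bilinear_ladd bilinear_lmul bilinear_lsub)
    have gW: "g W W = -2 * s * a + s * s * c"
      unfolding W_def using quad_expand[OF bil sy, of 1 Y "-s" Z'] YY a_def c_def by simp
    have "s * s * c \<le> s * s * t" using ct by (simp add: mult_left_mono)
    also have "s * s * t = a * a / t" unfolding s_def using t0 by (simp add: field_simps)
    finally have "g W W \<le> -2 * (a*a/t) + a*a/t" unfolding gW s_def by (simp add: field_simps)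
    also have "\<dots> < 0" proof - have "a*a > 0" using a0 by (auto simp: zero_less_mult_iff linorder_neq_iff) then have "a*a/t > 0" using t0 by simp then show ?thesis by simp qed
    finally show False using no_neg_perp[OF L e We] by blast
  qed
qed

lemma inj_on_kernel0:
  fixes f :: "'a::euclidean_space \<Rightarrow> 'b::euclidean_space"
  assumes "linear f" "subspace S" "\<forall>x\<in>S. f x = 0 \<longrightarrow> x = 0"
  shows "inj_on f S"
proof (rule inj_onI)
  fix x y assume "x \<in> S" "y \<in> S" "f x = f y"
  then have "x - y \<in> S" "f (x - y) = 0" using assms by (auto simp: subspace_diff linear_diff)
  then show "x = y" using assms(3) by auto
qed

lemma dim_image_sub:
  fixes f :: "'a::euclidean_space \<Rightarrow> 'b::euclidean_space"
  assumes "linear f" "subspace S" "\<forall>x\<in>S. f x = 0 \<longrightarrow> x = 0"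
  shows "dim (f ` S) = dim S"
  using dim_image_eq[OF assms(1)] inj_on_kernel0[OF assms] assms(2) by (metis span_eq_iff)

theorem mainTheorem17:
  fixes eps :: real and m n :: nat
    and gM :: "'p \<Rightarrow> 'v::euclidean_space \<Rightarrow> 'v \<Rightarrow> real"
    and \<phi> :: "'p \<Rightarrow> 'v \<Rightarrow> 'v" and \<xi> :: "'p \<Rightarrow> 'v" and \<eta> :: "'p \<Rightarrow> 'v \<Rightarrow> real"
    and gN :: "'q \<Rightarrow> 'w::euclidean_space \<Rightarrow> 'w \<Rightarrow> real"
    and F :: "'p \<Rightarrow> 'q" and dF :: "'p \<Rightarrow> 'v \<Rightarrow> 'w"
  assumes "eps = -1 \<or> eps = 1"
    and "DIM('v) = 2 * m + 1"
    and "lorentzian_almost_para_contact eps gM \<phi> \<xi> \<eta>"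
    and "DIM('w) = n"
    and "\<forall>q. semi_riemannian_form (gN q)"
    and "semi_riemannian_submersion gM gN F dF"
    and "anti_invariant gM \<phi> dF"
    and "m = n"
  shows "(\<forall>p. \<phi> p ` {v. dF p v = 0} = orth_compl (gM p) {v. dF p v = 0})
         \<and> (\<forall>q. positive_definite_form (gN q))"
proof -
  have key: "\<phi> p ` {v. dF p v = 0} = orth_compl (gM p) {v. dF p v = 0} \<and> \<xi> p \<in> {v. dF p v = 0}
     \<and> gM p (\<xi> p) (\<xi> p) < 0" for p
  proof -
    define g where "g = gM p"
    define f where "f = \<phi> p"
    define e where "e = \<xi> p"
    define h where "h = \<eta> p"
    define d where "d = dF p"
    define K where "K = {v. d v = 0}"
    define H where "H = orth_compl g K"
    have L: "lorentzian_form g" and lf: "linear f" and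
      ff: "\<And>X. f (f X) = eps *\<^sub>R X + h X *\<^sub>R e" and
      he: "\<And>X. h X = eps * g X e" and hee: "h e = - eps"
      using assms(3) unfolding lorentzian_almost_para_contact_def g_def f_def e_def h_def by blast+
    have bil: "bilinear g" and sy: "\<forall>x y. g x y = g y x"
      using L by (auto simp: lorentzian_form_def semi_riemannian_form_def sym_bilinear_form_def)
    have ld: "linear d" and ndK: "nondegenerate_on g K" and bij: "bij_betw d H UNIV"
      using assms(6) unfolding semi_riemannian_submersion_def d_def g_def K_def H_def by auto
    have fKH: "f ` K \<subseteq> H" using assms(7) unfolding anti_invariant_def f_def K_def H_def g_def d_def by auto
    have ee2: "eps * eps = 1" using assms(1) by auto
    have gee: "g e e = -1"
    proof -
      have "eps * g e e = - eps" using he[of e] hee by simp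
      then have "eps * (eps * g e e) = eps * (- eps)" by simp
      then show ?thesis using ee2 by (simp add: mult.assoc[symmetric])
    qed
    have kerf: "x = (- eps * h x) *\<^sub>R e" if "f x = 0" for x
    proof -
      have "0 = eps *\<^sub>R x + h x *\<^sub>R e" using ff[of x] that lf by (simp add: linear_0)
      then have 1: "eps *\<^sub>R x = - (h x *\<^sub>R e)" by (metis eq_neg_iff_add_eq_0)
      have "x = eps *\<^sub>R (eps *\<^sub>R x)" using ee2 by simp
      also have "\<dots> = (- eps * h x) *\<^sub>R e" unfolding 1 by simp
      finally show ?thesis .
    qed
    have sK: "subspace K" unfolding K_def using ld by (rule linear_subspace_kernel)
    have sH: "subspace H" unfolding H_def orth_compl_def subspace_def
      using bil by (auto simp: bilinear_ladd bilinear_lmul bilinear_lzero)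
    have KH0: "K \<inter> H = {0}"
    proof -
      have "x = 0" if "x \<in> K" "x \<in> H" for x
        using ndK that unfolding nondegenerate_on_def H_def orth_compl_def by auto
      then show ?thesis using sK sH by (auto simp: subspace_0)
    qed
    have sumKH: "{x + y |x y. x \<in> K \<and> y \<in> H} = UNIV"
    proof -
      have "v \<in> {x + y |x y. x \<in> K \<and> y \<in> H}" for v
      proof -
        obtain y where y: "y \<in> H" "d y = d v" using bij unfolding bij_betw_def by (metis UNIV_I imageE)
        have "v - y \<in> K" unfolding K_def using y ld by (simp add: linear_diff)
        moreover have "v = (v - y) + y" by simp
        ultimately show ?thesis using y(1) by blast
      qed
      then show ?thesis by auto
    qed
    have dimH: "dim H = m"
    proof -
      have "dim (d ` H) = dim H" using dim_image_eq[OF ld, of H] bij sH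
        by (metis bij_betw_def span_eq_iff)
      then show ?thesis using bij assms(4,8) by (simp add: bij_betw_def)
    qed
    have dimK: "dim K = m + 1"
      using dim_sums_Int[OF sK sH] sumKH KH0 dimH assms(2) by simp
    have eK: "e \<in> K"
    proof (rule ccontr)
      assume nK: "e \<notin> K"
      have "\<forall>x\<in>K. f x = 0 \<longrightarrow> x = 0"
      proof (intro ballI impI)
        fix x assume x: "x \<in> K" "f x = 0"
        show "x = 0"
        proof (rule ccontr)
          assume "x \<noteq> 0"
          then have c: "- eps * h x \<noteq> 0" using kerf[OF x(2)] by auto
          have "inverse (- eps * h x) *\<^sub>R x = (inverse (- eps * h x) * (- eps * h x)) *\<^sub>R e"
            using kerf[OF x(2)] by (metis scaleR_scaleR)
          moreover have "inverse (- eps * h x) * (- eps * h x) = 1" using c by (rule left_inverse)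
          ultimately have "e = inverse (- eps * h x) *\<^sub>R x" by simp
          then show False using x(1) sK nK by (metis subspace_scale)
        qed
      qed
      then have "dim (f ` K) = m + 1" using dim_image_sub[OF lf sK] dimK by simp
      moreover have "dim (f ` K) \<le> m" using dim_subset[OF fKH] dimH by simp
      ultimately show False by simp
    qed
    define K' where "K' = K \<inter> {x. g x e = 0}"
    have sK': "subspace K'" unfolding K'_def using sK bil
      by (auto simp: subspace_def bilinear_ladd bilinear_lmul bilinear_lzero)
    have e0: "e \<noteq> 0" using gee bil by (auto simp: bilinear_lzero)
    have "dim K' = m"
    proof -
      have sum: "{x + y |x y. x \<in> span {e} \<and> y \<in> K'} = K"
      proof
        show "{x + y |x y. x \<in> span {e} \<and> y \<in> K'} \<subseteq> K"
          using eK sK by (auto simp: K'_def span_singleton subspace_add subspace_scale)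
        show "K \<subseteq> {x + y |x y. x \<in> span {e} \<and> y \<in> K'}"
        proof
          fix x assume x: "x \<in> K"
          have "x + g x e *\<^sub>R e \<in> K'" unfolding K'_def using x eK sK bil gee
            by (simp add: subspace_add subspace_scale bilinear_ladd bilinear_lmul)
          moreover have "(- g x e) *\<^sub>R e \<in> span {e}" by (intro span_mul span_base) simp
          moreover have "x = (- g x e) *\<^sub>R e + (x + g x e *\<^sub>R e)" by (simp add: algebra_simps)
          ultimately show "x \<in> {x + y |x y. x \<in> span {e} \<and> y \<in> K'}" by blast
        qed
      qed
      have int: "span {e} \<inter> K' = {0}"
      proof -
        have "x = 0" if xa: "x \<in> span {e}" "x \<in> K'" for x
        proof -
          obtain k where k: "x = k *\<^sub>R e" using xa(1) by (auto simp: span_singleton)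
          have "g x e = 0" using xa(2) by (simp add: K'_def)
          then have "k = 0" using k bil gee by (simp add: bilinear_lmul)
          then show ?thesis using k by simp
        qed
        then show ?thesis using sK' by (auto simp: subspace_0 span_zero)
      qed
      have "dim K + dim ({0}::'v set) = dim (span {e}) + dim K'"
        using dim_sums_Int[OF subspace_span sK', of "{e}"] unfolding sum int .
      moreover have "dim (span {e}) = 1" using e0 by (simp only: dim_span dim_singleton if_False)
      moreover have "dim ({0}::'v set) = 0" by (simp add: dim_singleton)
      ultimately show ?thesis using dimK by linarith
    qed
    moreover have "\<forall>x\<in>K'. f x = 0 \<longrightarrow> x = 0"
    proof (intro ballI impI)
      fix x assume x: "x \<in> K'" "f x = 0"
      have "g x e = 0" using x(1) by (simp add: K'_def)
      moreover have "g x e = (- eps * h x) * g e e"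
        using kerf[OF x(2)] bilinear_lmul[OF bil, of "- eps * h x" e e] by simp
      ultimately have "(- eps * h x) = 0" using gee by simp
      then show "x = 0" using kerf[OF x(2)] by (metis scale_zero_left)
    qed
    ultimately have dK': "dim (f ` K') = m" using dim_image_sub[OF lf sK'] by simp
    have fK'K: "f ` K' \<subseteq> f ` K" unfolding K'_def by auto
    have "f ` K' = H"
      using subspace_dim_equal[OF linear_subspace_image[OF lf sK'] sH] fK'K fKH dK' dimH by auto
    then have "f ` K = H" using fK'K fKH by auto
    then show ?thesis using eK gee unfolding f_def H_def g_def K_def d_def e_def by simp
  qed
  show ?thesis
  proof (intro conjI allI)
    fix p show "\<phi> p ` {v. dF p v = 0} = orth_compl (gM p) {v. dF p v = 0}" using key by blast
  next
    fix q
    obtain p where p: "F p = q" using assms(6) unfolding semi_riemannian_submersion_def by (metis surjD)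
    have ld: "linear (dF p)" and bij: "bij_betw (dF p) (orth_compl (gM p) {v. dF p v = 0}) UNIV"
      and iso: "\<forall>X\<in>orth_compl (gM p) {v. dF p v = 0}. \<forall>Y\<in>orth_compl (gM p) {v. dF p v = 0}.
          gN (F p) (dF p X) (dF p Y) = gM p X Y"
      using assms(6) unfolding semi_riemannian_submersion_def by auto
    have L: "lorentzian_form (gM p)"
      using assms(3) unfolding lorentzian_almost_para_contact_def by auto
    have "gN q x x > 0" if "x \<noteq> 0" for x
    proof -
      obtain Y where Y: "Y \<in> orth_compl (gM p) {v. dF p v = 0}" "dF p Y = x"
        using bij unfolding bij_betw_def by (metis UNIV_I imageE)
      have "Y \<noteq> 0" using Y that ld by (auto simp: linear_0)
      moreover have "gM p Y (\<xi> p) = 0" using Y(1) key[of p] by (auto simp: orth_compl_def)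
      ultimately have "gM p Y Y > 0" using perp_pos[OF L] key[of p] by blast
      then show ?thesis using iso Y p by auto
    qed
    then show "positive_definite_form (gN q)"
      using assms(5) by (auto simp: positive_definite_form_def semi_riemannian_form_def)
  qed
qed
end
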